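(* In the transfer model and with the freeze algorithm $\mathrm{CalcFreeze}$ described in the context (applied after the cycle-elimination preprocessing, if $G$ has cycles), suppose no burn transactions occur between the disputed transaction $t_0$ and the freeze time, and let $s=\mathrm{val}(t_0)$ be the amount sent by $t_0=(v\to a_0)$. Then when the algorithm terminates, the total amount frozen is exactly $s$: $$ s=\sum_{a}\mathrm{toFreeze}(a), $$ where the sum ranges over all vertices $a$ of the (preprocessed) graph.
   Context: Transfer model. There is a finite set of addresses, each holding a nonnegative token balance. A transaction is a transfer $t=(a\to b)$ of value $\mathrm{val}(t)\ge 0$ from address $a$ to address $b$; it decreases the balance of $a$ by $\mathrm{val}(t)$ and increases the balance of $b$ by $\mathrm{val}(t)$. Transactions are totally ordered in time, and each transaction is valid: the sender's balance never becomes negative. There are no burns, i.e. no operation removes tokens from an address other than a transfer. The disputed transaction is $t_0=(v\to a_0)$ with $s=\mathrm{val}(t_0)$. The freeze happens at a time after $t_0$ and after all transactions considered. For an address $a$, $\mathrm{Bal}(a)$ denotes its balance at the freeze time; no amounts are frozen before this freeze. Transaction graph $G$. Consider the transactions strictly after $t_0$ and before the freeze. $G$ is the directed multigraph whose edges are those transactions $(b\to c)$ for which there is a directed path of such transactions from $a_0$ to $b$ ($b=a_0$ allowed). The vertices are $a_0$ and all endpoints of these edges. Each edge keeps its time and its value $\mathrm{val}$. Cycle elimination (preprocessing). While $G$ contains a directed cycle $c_0,\dots,c_{k-1}$ of edges, let $c$ be an edge of minimal value on it (ties broken arbitrarily) and $d=\mathrm{val}(c)$. Remove $c$ from $G$ and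 subtract $d$ from the value of every other edge of the cycle. Edge times are unchanged. Repeat until $G$ is acyclic. Algorithm $\mathrm{CalcFreeze}$ (on acyclic $G$): - Let $L$ be a topological order of the vertices of $G$, i.e. for every edge $a\to b$, $a$ precedes $b$. - Initialize $\mathrm{oblig}(a)=0$ for all $a\neq a_0$ and $\mathrm{oblig}(a_0)=s$. - For each $a$ in the order $L$: - Set $\tau=\mathrm{oblig}(a)$, $\mathrm{toFreeze}(a)=\min(\tau,\mathrm{Bal}(a))$ and $\tau'=\tau-\mathrm{toFreeze}(a)$. - If $\tau'\le 0$, proceed to the next vertex. - Otherwise, iterate over the outgoing edges $t=(a\to b)$ of $a$ in $G$ in reverse chronological order (most recent first). For each such edge set $\mathrm{ob}(b,t)=\min(\tau',\mathrm{val}(t))$, add $\mathrm{ob}(b,t)$ to $\mathrm{oblig}(b)$, and subtract $\mathrm{ob}(b,t)$ from $\tau'$. Stop iterating over the edges of $a$ as soon as $\tau'\le 0$. - Edges never processed have $\mathrm{ob}(b,t)=0$. *)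

theory Defs
  imports Complex_Main
begin

text \<open>Transactions are given as a chronologically ordered list of triples
  (sender, receiver, value).  The time of the transaction at list position j is j.\<close>

type_synonym ('a) tx = "'a \<times> 'a \<times> real"

definition tsrc :: "'a tx list \<Rightarrow> nat \<Rightarrow> 'a" where
  "tsrc txs j = fst (txs ! j)"

definition tdst :: "'a tx list \<Rightarrow> nat \<Rightarrow> 'a" where
  "tdst txs j = fst (snd (txs ! j))"

definition tval :: "'a tx list \<Rightarrow> nat \<Rightarrow> real" where
  "tval txs j = snd (snd (txs ! j))"

text \<open>Balance of address a after the first n transactions, starting from initial balances init.
  Only transfers change balances (no burns).\<close>
definition bal :: "('a \<Rightarrow> real) \<Rightarrow> 'a tx list \<Rightarrow> nat \<Rightarrow> 'a \<Rightarrow> real" where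
  "bal init txs n a = init a
     + (\<Sum>j<n. (if tdst txs j = a then tval txs j else 0) - (if tsrc txs j = a then tval txs j else 0))"

definition valid_history :: "('a \<Rightarrow> real) \<Rightarrow> 'a tx list \<Rightarrow> bool" where
  "valid_history init txs \<longleftrightarrow> (\<forall>a. 0 \<le> init a) \<and>
     (\<forall>j < length txs. 0 \<le> tval txs j \<and> tval txs j \<le> bal init txs j (tsrc txs j))"

definition after_rel :: "'a tx list \<Rightarrow> nat \<Rightarrow> ('a \<times> 'a) set" where
  "after_rel txs i0 = {(tsrc txs j, tdst txs j) | j. i0 < j \<and> j < length txs}"

text \<open>Edges of the transaction graph G (identified by their time index).\<close>
definition G_edges :: "'a tx list \<Rightarrow> nat \<Rightarrow> nat set" where
  "G_edges txs i0 = {j. i0 < j \<and> j < length txs \<and>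
      (tdst txs i0, tsrc txs j) \<in> (after_rel txs i0)\<^sup>*}"

definition G_vertices :: "'a tx list \<Rightarrow> nat \<Rightarrow> 'a set" where
  "G_vertices txs i0 = insert (tdst txs i0)
      (tsrc txs ` G_edges txs i0 \<union> tdst txs ` G_edges txs i0)"

definition is_cycle :: "(nat \<Rightarrow> 'a) \<Rightarrow> (nat \<Rightarrow> 'a) \<Rightarrow> nat set \<Rightarrow> nat list \<Rightarrow> bool" where
  "is_cycle src dst E cs \<longleftrightarrow> cs \<noteq> [] \<and> distinct cs \<and> set cs \<subseteq> E \<and>
     (\<forall>k < length cs. dst (cs ! k) = src (cs ! ((k + 1) mod length cs)))"

definition elim_step :: "(nat \<Rightarrow> 'a) \<Rightarrow> (nat \<Rightarrow> 'a) \<Rightarrow>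
    nat set \<times> (nat \<Rightarrow> real) \<Rightarrow> nat set \<times> (nat \<Rightarrow> real) \<Rightarrow> bool" where
  "elim_step src dst G G' \<longleftrightarrow> (\<exists>cs c. is_cycle src dst (fst G) cs \<and> c \<in> set cs \<and>
      (\<forall>e \<in> set cs. snd G c \<le> snd G e) \<and>
      G' = (fst G - {c}, (\<lambda>e. if e \<in> set cs \<and> e \<noteq> c then snd G e - snd G c else snd G e)))"

definition acyclic_edges :: "(nat \<Rightarrow> 'a) \<Rightarrow> (nat \<Rightarrow> 'a) \<Rightarrow> nat set \<Rightarrow> bool" where
  "acyclic_edges src dst E \<longleftrightarrow> \<not> (\<exists>cs. is_cycle src dst E cs)"

definition topo_order :: "(nat \<Rightarrow> 'a) \<Rightarrow> (nat \<Rightarrow> 'a) \<Rightarrow> 'a set \<Rightarrow> nat set \<Rightarrow> 'a list \<Rightarrow> bool" where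
  "topo_order src dst V E L \<longleftrightarrow> distinct L \<and> set L = V \<and>
     (\<forall>e \<in> E. \<exists>i j. i < j \<and> j < length L \<and> L ! i = src e \<and> L ! j = dst e)"

fun distribute :: "(nat \<Rightarrow> 'a) \<Rightarrow> (nat \<Rightarrow> real) \<Rightarrow> real \<Rightarrow> nat list \<Rightarrow> ('a \<Rightarrow> real) \<Rightarrow> ('a \<Rightarrow> real)" where
  "distribute dst w tau [] ob = ob"
| "distribute dst w tau (e # es) ob =
     (if tau \<le> 0 then ob
      else (let x = min tau (w e) in distribute dst w (tau - x) es (ob(dst e := ob (dst e) + x))))"

definition out_edges_rev :: "(nat \<Rightarrow> 'a) \<Rightarrow> nat set \<Rightarrow> 'a \<Rightarrow> nat list" where
  "out_edges_rev src E a = rev (sorted_list_of_set {e \<in> E. src e = a})"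

text \<open>Main loop of CalcFreeze; state = (oblig, toFreeze).\<close>
fun process :: "(nat \<Rightarrow> 'a) \<Rightarrow> (nat \<Rightarrow> 'a) \<Rightarrow> (nat \<Rightarrow> real) \<Rightarrow> nat set \<Rightarrow> ('a \<Rightarrow> real) \<Rightarrow>
    'a list \<Rightarrow> ('a \<Rightarrow> real) \<Rightarrow> ('a \<Rightarrow> real) \<Rightarrow> ('a \<Rightarrow> real) \<times> ('a \<Rightarrow> real)" where
  "process src dst w E B [] ob tf = (ob, tf)"
| "process src dst w E B (a # L) ob tf =
     (let tau = ob a; f = min tau (B a); tau' = tau - f; tf' = tf(a := f) in
      if tau' \<le> 0 then process src dst w E B L ob tf'
      else process src dst w E B L (distribute dst w tau' (out_edges_rev src E a) ob) tf')"

definition calc_freeze :: "(nat \<Rightarrow> 'a) \<Rightarrow> (nat \<Rightarrow> 'a) \<Rightarrow> (nat \<Rightarrow> real) \<Rightarrow> nat set \<Rightarrow> ('a \<Rightarrow> real) \<Rightarrow>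
    'a list \<Rightarrow> 'a \<Rightarrow> real \<Rightarrow> 'a \<Rightarrow> real" where
  "calc_freeze src dst w E B L a0 s =
     snd (process src dst w E B L (\<lambda>a. if a = a0 then s else 0) (\<lambda>_. 0))"

end

theory Submission
  imports Defs
begin

lemma distribute_sum:
  assumes "\<forall>e\<in>set es. 0 \<le> w e" "0 \<le> tau" "tau \<le> sum_list (map w es)"
    "finite T" "dst ` set es \<subseteq> T"
  shows "sum (distribute dst w tau es ob) T = sum ob T + tau"
  using assms
proof (induction es arbitrary: tau ob)
  case Nil
  then show ?case by simp
next
  case (Cons e es)
  show ?case
  proof (cases "tau \<le> 0")
    case True
    then show ?thesis using Cons.prems by simp
  next
    case False
    define x where "x = min tau (w e)"
    have upd: "ob(dst e := ob (dst e) + x) = (\<lambda>a. ob a + (if a = dst e then x else 0))"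
      by auto
    have de: "dst e \<in> T" using Cons.prems by auto
    have "sum (ob(dst e := ob (dst e) + x)) T = sum ob T + x"
      unfolding upd using de Cons.prems(4) by (simp add: sum.distrib)
    moreover have "sum (distribute dst w (tau - x) es (ob(dst e := ob (dst e) + x))) T
        = sum (ob(dst e := ob (dst e) + x)) T + (tau - x)"
      apply (rule Cons.IH)
      using Cons.prems sum_list_nonneg[of "map w es"] unfolding x_def by (auto simp: min_def)
    ultimately show ?thesis using False by (simp add: x_def Let_def)
  qed
qed

lemma distribute_le:
  assumes "\<forall>e\<in>set es. 0 \<le> w e"
  shows "distribute dst w tau es ob b \<le> ob b + sum_list (map (\<lambda>e. if dst e = b then w e else 0) es)"
  using assms
proof (induction es arbitrary: tau ob)
  case Nil
  then show ?case by simp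
next
  case (Cons e es)
  have nn: "0 \<le> sum_list (map (\<lambda>e. if dst e = b then w e else 0) es)"
    using Cons.prems by (intro sum_list_nonneg) auto
  show ?case
  proof (cases "tau \<le> 0")
    case True
    then show ?thesis using Cons.prems nn by simp
  next
    case False
    define x where "x = min tau (w e)"
    have "distribute dst w (tau - x) es (ob(dst e := ob (dst e) + x)) b
       \<le> (ob(dst e := ob (dst e) + x)) b + sum_list (map (\<lambda>e. if dst e = b then w e else 0) es)"
      by (rule Cons.IH) (use Cons.prems in simp)
    moreover have "(ob(dst e := ob (dst e) + x)) b = ob b + (if dst e = b then x else 0)" by simp
    moreover have "x \<le> w e" unfolding x_def by simp
    moreover have "distribute dst w tau (e # es) ob b = distribute dst w (tau - x) es (ob(dst e := ob (dst e) + x)) b"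
      using False by (simp add: x_def Let_def)
    ultimately show ?thesis by (cases "dst e = b") auto
  qed
qed

lemma cycle_balance:
  assumes "is_cycle src dst E cs"
  shows "sum (\<lambda>e. if dst e = a then (d::real) else 0) (set cs)
       = sum (\<lambda>e. if src e = a then d else 0) (set cs)"
proof -
  have dis: "distinct cs" and ne: "cs \<noteq> []" and lk: "\<forall>k < length cs. dst (cs ! k) = src (cs ! ((k + 1) mod length cs))"
    using assms unfolding is_cycle_def by auto
  obtain m where m: "length cs = Suc m" using ne by (cases cs) auto
  define g where "g k = (if src (cs ! k) = a then d else 0)" for k
  have "sum (\<lambda>e. if dst e = a then (d::real) else 0) (set cs)
      = (\<Sum>k<length cs. if dst (cs!k) = a then d else 0)"
    using dis by (simp add: sum_list_distinct_conv_sum_set[symmetric] sum_list_sum_nth atLeast0LessThan)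
  also have "\<dots> = (\<Sum>k<Suc m. g (Suc k mod Suc m))"
    using lk m by (intro sum.cong) (auto simp: g_def)
  also have "\<dots> = (\<Sum>k<Suc m. g k)"
  proof -
    have "(\<Sum>k<Suc m. g (Suc k mod Suc m)) = (\<Sum>k<m. g (Suc k mod Suc m)) + g 0"
      by simp
    also have "(\<Sum>k<m. g (Suc k mod Suc m)) = (\<Sum>k<m. g (Suc k))"
      by (intro sum.cong) auto
    moreover have "(\<Sum>k<Suc m. g k) = g 0 + (\<Sum>k<m. g (Suc k))"
      by (rule sum.lessThan_Suc_shift)
    ultimately show ?thesis by linarith
  qed
  also have "\<dots> = sum (\<lambda>e. if src e = a then d else 0) (set cs)"
    using dis m by (simp add: g_def sum_list_distinct_conv_sum_set[symmetric] sum_list_sum_nth atLeast0LessThan)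
  finally show ?thesis .
qed

lemma elim_step_inv:
  assumes st: "elim_step src dst (E, w) (E', w')" and fin: "finite E" and nn: "\<forall>e\<in>E. 0 \<le> w e"
  shows "E' \<subseteq> E \<and> (\<forall>e\<in>E'. 0 \<le> w' e) \<and>
    (\<forall>a. sum w' {e\<in>E'. dst e = a} - sum w' {e\<in>E'. src e = a}
       = sum w {e\<in>E. dst e = a} - sum w {e\<in>E. src e = a})"
proof -
  obtain cs c where cyc: "is_cycle src dst E cs" and c: "c \<in> set cs"
    and mn: "\<forall>e\<in>set cs. w c \<le> w e" and E': "E' = E - {c}"
    and w': "w' = (\<lambda>e. if e \<in> set cs \<and> e \<noteq> c then w e - w c else w e)"
    using st unfolding elim_step_def by (simp only: fst_conv snd_conv prod.inject) blast
  have csE: "set cs \<subseteq> E" using cyc unfolding is_cycle_def by auto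
  define g where "g e = w e - (if e \<in> set cs then w c else 0)" for e
  have key: "sum w' {e\<in>E'. P e} = sum w {e\<in>E. P e} - sum (\<lambda>e. if P e then w c else 0) (set cs)" for P
  proof -
    have "sum w' {e\<in>E'. P e} = sum g {e\<in>E'. P e}"
      unfolding E' w' g_def by (intro sum.cong) auto
    also have "\<dots> = sum g {e\<in>E. P e}"
      by (rule sum.mono_neutral_left) (use fin in \<open>auto simp: E' g_def c\<close>)
    also have "\<dots> = sum w {e\<in>E. P e} - sum (\<lambda>e. if e \<in> set cs then w c else 0) {e\<in>E. P e}"
      unfolding g_def by (simp add: sum_subtractf)
    also have "sum (\<lambda>e. if e \<in> set cs then w c else 0) {e\<in>E. P e} = sum (\<lambda>e. w c) {e\<in>{e\<in>E. P e}. e \<in> set cs}"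
      using fin sum.inter_filter[of "{e\<in>E. P e}" "\<lambda>e. w c" "\<lambda>e. e \<in> set cs"] by simp
    also have "{e\<in>{e\<in>E. P e}. e \<in> set cs} = {e \<in> set cs. P e}" using csE by auto
    also have "sum (\<lambda>e. w c) {e \<in> set cs. P e} = sum (\<lambda>e. if P e then w c else 0) (set cs)"
      using sum.inter_filter[of "set cs" "\<lambda>e. w c" P] by simp
    finally show ?thesis .
  qed
  have bal: "sum (\<lambda>e. if dst e = a then w c else 0) (set cs) = sum (\<lambda>e. if src e = a then w c else 0) (set cs)" for a
    by (rule cycle_balance[OF cyc])
  show ?thesis
  proof (intro conjI allI ballI)
    show "E' \<subseteq> E" using E' by auto
  next
    fix e assume "e \<in> E'"
    then show "0 \<le> w' e" using nn mn E' w' by auto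
  next
    fix a
    show "sum w' {e\<in>E'. dst e = a} - sum w' {e\<in>E'. src e = a}
       = sum w {e\<in>E. dst e = a} - sum w {e\<in>E. src e = a}"
      using key[of "\<lambda>e. dst e = a"] key[of "\<lambda>e. src e = a"] bal[of a] by simp
  qed
qed

lemma elim_inv:
  assumes "(elim_step src dst)\<^sup>*\<^sup>* (E0, w0) G" "finite E0" "\<forall>e\<in>E0. 0 \<le> w0 e"
  shows "fst G \<subseteq> E0 \<and> (\<forall>e\<in>fst G. 0 \<le> snd G e) \<and>
    (\<forall>a. sum (snd G) {e\<in>fst G. dst e = a} - sum (snd G) {e\<in>fst G. src e = a}
       = sum w0 {e\<in>E0. dst e = a} - sum w0 {e\<in>E0. src e = a})"
  using assms(1)
proof (induction rule: rtranclp_induct)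
  case base
  then show ?case using assms by simp
next
  case (step y z)
  obtain E w where y: "y = (E, w)" by (cases y)
  obtain E' w' where z: "z = (E', w')" by (cases z)
  have fin: "finite E" using step.IH assms(2) y by (auto intro: finite_subset)
  have "E' \<subseteq> E \<and> (\<forall>e\<in>E'. 0 \<le> w' e) \<and>
    (\<forall>a. sum w' {e\<in>E'. dst e = a} - sum w' {e\<in>E'. src e = a}
       = sum w {e\<in>E. dst e = a} - sum w {e\<in>E. src e = a})"
    by (rule elim_step_inv) (use step y z fin in auto)
  then show ?case using step.IH y z by auto
qed

lemma out_edges_props:
  assumes "finite E"
  shows "distinct (out_edges_rev src E x) \<and> set (out_edges_rev src E x) = {e\<in>E. src e = x}"
  using assms unfolding out_edges_rev_def by simp

lemma process_sum:
  fixes R :: "'a list" and c B :: "'a \<Rightarrow> real"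
  assumes "distinct R" "finite E" "\<forall>e\<in>E. 0 \<le> w e"
    "\<forall>e\<in>E. \<forall>k<length R. R!k = src e \<longrightarrow> dst e \<in> set (drop (Suc k) R)"
    "\<forall>a\<in>set R. c a + sum w {e\<in>E. dst e = a} - sum w {e\<in>E. src e = a} \<le> B a"
    "\<forall>a\<in>set R. ob a \<le> c a + sum w {e\<in>E. dst e = a \<and> src e \<notin> set R}"
    "\<forall>a\<in>set R. tf a = 0" "finite S" "set R \<subseteq> S"
  shows "sum (snd (process src dst w E B R ob tf)) S = sum tf S + sum ob (set R)"
  using assms
proof (induction R arbitrary: ob tf)
  case Nil
  then show ?case by simp
next
  case (Cons x R)
  note P = Cons.prems
  define tau where "tau = ob x"
  define f where "f = min tau (B x)"
  define tf' where "tf' = tf(x := f)"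
  have xS: "x \<in> S" using P by auto
  have xR: "x \<notin> set R" using P by auto
  have tfx: "tf x = 0" using P by auto
  have sumtf': "sum tf' S = sum tf S + f"
  proof -
    have "tf' = (\<lambda>a. tf a + (if a = x then f else 0))" using tfx unfolding tf'_def by auto
    then show ?thesis using xS P(8) by (simp add: sum.distrib)
  qed
  have ord': "\<forall>e\<in>E. \<forall>k<length R. R!k = src e \<longrightarrow> dst e \<in> set (drop (Suc k) R)"
  proof (intro ballI allI impI)
    fix e k assume e: "e \<in> E" and k: "k < length R" and r: "R ! k = src e"
    have "dst e \<in> set (drop (Suc (Suc k)) (x # R))"
      using P(4) e k r by (metis Suc_less_eq length_Cons nth_Cons_Suc)
    then show "dst e \<in> set (drop (Suc k) R)" by simp
  qed
  have tf'0: "\<forall>a\<in>set R. tf' a = 0" using P xR unfolding tf'_def by auto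
  have obx: "ob x \<le> c x + sum w {e\<in>E. dst e = x}"
  proof -
    have "sum w {e\<in>E. dst e = x \<and> src e \<notin> set (x#R)} \<le> sum w {e\<in>E. dst e = x}"
      using P(2,3) by (intro sum_mono2) auto
    then show ?thesis using P(6) by force
  qed
  show ?case
  proof (cases "tau - f \<le> 0")
    case True
    have ftau: "f = tau" using True unfolding f_def by linarith
    have proc: "process src dst w E B (x # R) ob tf = process src dst w E B R ob tf'"
      using True unfolding tau_def f_def tf'_def by (simp add: Let_def)
    have ob': "\<forall>a\<in>set R. ob a \<le> c a + sum w {e\<in>E. dst e = a \<and> src e \<notin> set R}"
    proof
      fix a assume a: "a \<in> set R"
      have "sum w {e\<in>E. dst e = a \<and> src e \<notin> set (x#R)} \<le> sum w {e\<in>E. dst e = a \<and> src e \<notin> set R}"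
        using P(2,3) by (intro sum_mono2) auto
      then show "ob a \<le> c a + sum w {e\<in>E. dst e = a \<and> src e \<notin> set R}" using P(6) a by force
    qed
    have "sum (snd (process src dst w E B R ob tf')) S = sum tf' S + sum ob (set R)"
      by (rule Cons.IH) (use P ord' tf'0 ob' in auto)
    then show ?thesis using proc sumtf' ftau xR by (simp add: tau_def)
  next
    case False
    have fB: "f = B x" using False unfolding f_def by linarith
    define es where "es = out_edges_rev src E x"
    have es: "distinct es" "set es = {e\<in>E. src e = x}"
      using out_edges_props[OF P(2), of src x] unfolding es_def by auto
    define ob' where "ob' = distribute dst w (tau - f) es ob"
    have proc: "process src dst w E B (x # R) ob tf = process src dst w E B R ob' tf'"
      using False unfolding tau_def f_def tf'_def ob'_def es_def by (simp add: Let_def)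
    have dstR: "dst e \<in> set R" if "e \<in> E" "src e = x" for e
      using P(4) that by fastforce
    have slist: "sum_list (map h es) = sum h {e\<in>E. src e = x}" for h :: "nat \<Rightarrow> real"
      using es by (simp add: sum_list_distinct_conv_sum_set)
    have tle: "tau - f \<le> sum_list (map w es)"
      using obx P(5) fB slist[of w] unfolding tau_def by force
    have sumob': "sum ob' (set R) = sum ob (set R) + (tau - f)"
      unfolding ob'_def
      by (rule distribute_sum) (use es P(3) False tle dstR in auto)
    have ob'le: "ob' a \<le> ob a + sum w {e\<in>E. src e = x \<and> dst e = a}" for a
    proof -
      have "ob' a \<le> ob a + sum_list (map (\<lambda>e. if dst e = a then w e else 0) es)"
        unfolding ob'_def by (rule distribute_le) (use es P(3) in auto)
      also have "sum_list (map (\<lambda>e. if dst e = a then w e else 0) es)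
          = sum (\<lambda>e. if dst e = a then w e else 0) {e\<in>E. src e = x}" by (rule slist)
      also have "\<dots> = sum w {e\<in>{e\<in>E. src e = x}. dst e = a}"
        using P(2) sum.inter_filter[of "{e\<in>E. src e = x}" w "\<lambda>e. dst e = a"] by simp
      also have "{e\<in>{e\<in>E. src e = x}. dst e = a} = {e\<in>E. src e = x \<and> dst e = a}" by auto
      finally show ?thesis .
    qed
    have ob'b: "\<forall>a\<in>set R. ob' a \<le> c a + sum w {e\<in>E. dst e = a \<and> src e \<notin> set R}"
    proof
      fix a assume a: "a \<in> set R"
      have split: "{e\<in>E. dst e = a \<and> src e \<notin> set R} =
          {e\<in>E. dst e = a \<and> src e \<notin> set (x#R)} \<union> {e\<in>E. src e = x \<and> dst e = a}"
        using xR by auto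
      have "sum w {e\<in>E. dst e = a \<and> src e \<notin> set R} =
          sum w {e\<in>E. dst e = a \<and> src e \<notin> set (x#R)} + sum w {e\<in>E. src e = x \<and> dst e = a}"
        unfolding split by (rule sum.union_disjoint) (use P(2) in auto)
      then show "ob' a \<le> c a + sum w {e\<in>E. dst e = a \<and> src e \<notin> set R}"
        using ob'le[of a] P(6) a by force
    qed
    have "sum (snd (process src dst w E B R ob' tf')) S = sum tf' S + sum ob' (set R)"
      by (rule Cons.IH) (use P ord' tf'0 ob'b in auto)
    then show ?thesis using proc sumtf' sumob' fB xR by (simp add: tau_def)
  qed
qed

lemma bal_Suc: "bal init txs (Suc n) a = bal init txs n a +
   ((if tdst txs n = a then tval txs n else 0) - (if tsrc txs n = a then tval txs n else 0))"
  unfolding bal_def by simp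

lemma bal_nonneg:
  assumes "valid_history init txs" "n \<le> length txs"
  shows "0 \<le> bal init txs n a"
  using assms(2)
proof (induction n arbitrary: a)
  case 0
  then show ?case using assms(1) unfolding valid_history_def bal_def by simp
next
  case (Suc n)
  have v: "0 \<le> tval txs n" "tval txs n \<le> bal init txs n (tsrc txs n)"
    using assms(1) Suc.prems unfolding valid_history_def by auto
  have "0 \<le> bal init txs n a" using Suc by simp
  then show ?case unfolding bal_Suc using v by auto
qed

lemma bal_split:
  assumes "i0 < length txs"
  shows "bal init txs (length txs) a = bal init txs (Suc i0) a +
     (\<Sum>j\<in>{j. i0 < j \<and> j < length txs}. (if tdst txs j = a then tval txs j else 0) - (if tsrc txs j = a then tval txs j else 0))"
proof -
  define D where "D j = (if tdst txs j = a then tval txs j else 0) - (if tsrc txs j = a then tval txs j else 0)" for j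
  have eq: "{..<length txs} = {..<Suc i0} \<union> {j. i0 < j \<and> j < length txs}" using assms by auto
  have h: "(\<Sum>j<length txs. D j) = (\<Sum>j<Suc i0. D j) + (\<Sum>j\<in>{j. i0 < j \<and> j < length txs}. D j)"
    by (subst eq) (rule sum.union_disjoint, auto)
  show ?thesis using h unfolding bal_def D_def by linarith
qed

lemma reach_vertices:
  assumes "a \<in> G_vertices txs i0"
  shows "(tdst txs i0, a) \<in> (after_rel txs i0)\<^sup>*"
proof -
  have "a = tdst txs i0 \<or> (\<exists>j\<in>G_edges txs i0. a = tsrc txs j \<or> a = tdst txs j)"
    using assms unfolding G_vertices_def by auto
  moreover have "(tdst txs i0, a) \<in> (after_rel txs i0)\<^sup>*"
    if j: "j \<in> G_edges txs i0" "a = tsrc txs j \<or> a = tdst txs j" for j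
  proof -
    have r: "(tdst txs i0, tsrc txs j) \<in> (after_rel txs i0)\<^sup>*" and e: "(tsrc txs j, tdst txs j) \<in> after_rel txs i0"
      using j(1) unfolding G_edges_def after_rel_def by auto
    show ?thesis using j(2) r rtrancl_into_rtrancl[OF r e] by auto
  qed
  ultimately show ?thesis by auto
qed

lemma vertex_balance:
  assumes valid: "valid_history init txs" and t0: "i0 < length txs"
    and a: "a \<in> G_vertices txs i0"
  shows "(if a = tdst txs i0 then tval txs i0 else 0)
     + sum (tval txs) {e\<in>G_edges txs i0. tdst txs e = a} - sum (tval txs) {e\<in>G_edges txs i0. tsrc txs e = a}
     \<le> bal init txs (length txs) a"
proof -
  let ?A = "{j. i0 < j \<and> j < length txs}"
  let ?G = "G_edges txs i0"
  have finA: "finite ?A" by (rule finite_subset[of _ "{..<length txs}"]) auto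
  have GA: "?G \<subseteq> ?A" unfolding G_edges_def by auto
  have nn: "\<forall>j<length txs. 0 \<le> tval txs j" using valid unfolding valid_history_def by auto
  have inA: "sum (tval txs) {e\<in>?G. tdst txs e = a} \<le> (\<Sum>j\<in>?A. if tdst txs j = a then tval txs j else 0)"
  proof -
    have "(\<Sum>j\<in>?A. if tdst txs j = a then tval txs j else 0) = sum (tval txs) {j\<in>?A. tdst txs j = a}"
      using finA sum.inter_filter[of ?A "tval txs" "\<lambda>j. tdst txs j = a"] by simp
    moreover have "sum (tval txs) {e\<in>?G. tdst txs e = a} \<le> sum (tval txs) {j\<in>?A. tdst txs j = a}"
      using finA GA nn by (intro sum_mono2) auto
    ultimately show ?thesis by simp
  qed
  have outA: "sum (tval txs) {e\<in>?G. tsrc txs e = a} = (\<Sum>j\<in>?A. if tsrc txs j = a then tval txs j else 0)"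
  proof -
    have "(\<Sum>j\<in>?A. if tsrc txs j = a then tval txs j else 0) = sum (tval txs) {j\<in>?A. tsrc txs j = a}"
      using finA sum.inter_filter[of ?A "tval txs" "\<lambda>j. tsrc txs j = a"] by simp
    moreover have "{j\<in>?A. tsrc txs j = a} = {e\<in>?G. tsrc txs e = a}"
      using reach_vertices[OF a] unfolding G_edges_def by auto
    ultimately show ?thesis by simp
  qed
  have b0: "(if a = tdst txs i0 then tval txs i0 else 0) \<le> bal init txs (Suc i0) a"
  proof (cases "a = tdst txs i0")
    case True
    have v: "0 \<le> tval txs i0" "tval txs i0 \<le> bal init txs i0 (tsrc txs i0)"
      using valid t0 unfolding valid_history_def by auto
    have "0 \<le> bal init txs i0 a" using bal_nonneg[OF valid] t0 by simp
    then show ?thesis using True v unfolding bal_Suc by auto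
  next
    case False
    then show ?thesis using bal_nonneg[OF valid, of "Suc i0"] t0 by simp
  qed
  show ?thesis
    using bal_split[OF t0, of init a] b0 inA outA by (simp add: sum_subtractf)
qed

theorem theoremA1:
  fixes init :: "'a \<Rightarrow> real" and txs :: "'a tx list" and i0 :: nat
    and E :: "nat set" and w :: "nat \<Rightarrow> real" and L :: "'a list"
  assumes valid: "valid_history init txs"
    and t0: "i0 < length txs"
    and pre: "(elim_step (tsrc txs) (tdst txs))\<^sup>*\<^sup>* (G_edges txs i0, tval txs) (E, w)"
    and acyc: "acyclic_edges (tsrc txs) (tdst txs) E"
    and topo: "topo_order (tsrc txs) (tdst txs) (G_vertices txs i0) E L"
  shows "tval txs i0 =
     (\<Sum>a \<in> G_vertices txs i0.
        calc_freeze (tsrc txs) (tdst txs) w E (bal init txs (length txs)) L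
          (tdst txs i0) (tval txs i0) a)"
proof -
  let ?G = "G_edges txs i0"
  let ?V = "G_vertices txs i0"
  let ?a0 = "tdst txs i0"
  let ?s = "tval txs i0"
  define c where "c a = (if a = ?a0 then ?s else 0)" for a
  have finG: "finite ?G" by (rule finite_subset[of _ "{..<length txs}"]) (auto simp: G_edges_def)
  have nnG: "\<forall>e\<in>?G. 0 \<le> tval txs e" using valid unfolding valid_history_def G_edges_def by auto
  have inv: "E \<subseteq> ?G \<and> (\<forall>e\<in>E. 0 \<le> w e) \<and>
    (\<forall>a. sum w {e\<in>E. tdst txs e = a} - sum w {e\<in>E. tsrc txs e = a}
       = sum (tval txs) {e\<in>?G. tdst txs e = a} - sum (tval txs) {e\<in>?G. tsrc txs e = a})"
    using elim_inv[OF pre finG nnG] by simp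
  have nnE: "\<forall>e\<in>E. 0 \<le> w e" using inv by blast
  have finE: "finite E" using inv finG by (auto intro: finite_subset)
  have dL: "distinct L" and sL: "set L = ?V"
    and ordL: "\<forall>e\<in>E. \<exists>i j. i < j \<and> j < length L \<and> L ! i = tsrc txs e \<and> L ! j = tdst txs e"
    using topo unfolding topo_order_def by auto
  have ord: "\<forall>e\<in>E. \<forall>k<length L. L!k = tsrc txs e \<longrightarrow> tdst txs e \<in> set (drop (Suc k) L)"
  proof (intro ballI allI impI)
    fix e k assume e: "e \<in> E" and k: "k < length L" and lk: "L ! k = tsrc txs e"
    obtain i j where ij: "i < j" "j < length L" "L ! i = tsrc txs e" "L ! j = tdst txs e"
      using ordL e by blast
    have "k = i" using dL k ij lk using nth_eq_iff_index_eq[OF dL k, of i] by simp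
    then have "drop (Suc k) L ! (j - Suc k) = tdst txs e" using ij by simp
    moreover have "j - Suc k < length (drop (Suc k) L)" using ij \<open>k = i\<close> by simp
    ultimately show "tdst txs e \<in> set (drop (Suc k) L)" by (metis nth_mem)
  qed
  have balc: "\<forall>a\<in>set L. c a + sum w {e\<in>E. tdst txs e = a} - sum w {e\<in>E. tsrc txs e = a}
      \<le> bal init txs (length txs) a"
  proof
    fix a assume "a \<in> set L"
    then have a: "a \<in> ?V" using sL by simp
    show "c a + sum w {e\<in>E. tdst txs e = a} - sum w {e\<in>E. tsrc txs e = a}
      \<le> bal init txs (length txs) a"
    proof -
      have n: "sum w {e\<in>E. tdst txs e = a} - sum w {e\<in>E. tsrc txs e = a}
       = sum (tval txs) {e\<in>?G. tdst txs e = a} - sum (tval txs) {e\<in>?G. tsrc txs e = a}"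
        using inv by blast
      show ?thesis using vertex_balance[OF valid t0 a] n unfolding c_def by linarith
    qed
  qed
  have obc: "\<forall>a\<in>set L. c a \<le> c a + sum w {e\<in>E. tdst txs e = a \<and> tsrc txs e \<notin> set L}"
    using nnE by (auto intro!: sum_nonneg)
  have main: "sum (snd (process (tsrc txs) (tdst txs) w E (bal init txs (length txs)) L c (\<lambda>_. 0))) (set L)
      = sum (\<lambda>_. 0) (set L) + sum c (set L)"
    by (rule process_sum[OF dL finE nnE ord balc _ _ finite_set order.refl]) (use obc in \<open>simp_all add: c_def\<close>)
  have a0: "?a0 \<in> set L" using sL unfolding G_vertices_def by auto
  have "sum c (set L) = ?s" unfolding c_def using a0 by (simp add: sum.delta')
  moreover have cf: "(\<lambda>a. if a = ?a0 then ?s else 0) = c" unfolding c_def by simp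
  ultimately show ?thesis using main unfolding calc_freeze_def cf sL by simp
qed

end
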